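(* For every integer $m\ge3$, \[ \sum_{n=1}^{\infty}\frac{h_n^{(2)}}{n^{m}}=\sum_{n=1}^{\infty}H_n\,\zeta(m,n)=\zeta_H(m-1)+\zeta_H(m)-\zeta(m-1). \]
   Context: Hyperharmonic numbers: $h_n^{(0)}=1/n$ for $n\ge1$, and for $r\ge1$, $h_n^{(r)}=\sum_{j=1}^{n}h_j^{(r-1)}$. $H_n=\sum_{j=1}^n 1/j$. $\zeta$ is the Riemann zeta function, $\zeta(s,a)=\sum_{j=0}^\infty (j+a)^{-s}$ the Hurwitz zeta function, and $\zeta_H(s)=\sum_{n=1}^{\infty}H_n/n^{s}$ for integers $s\ge2$. *)

theory Defs
  imports "HOL-Analysis.Analysis"
begin

text \<open>Hyperharmonic numbers h_n^(r) (only meaningful for n \<ge> 1;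
  the value at n = 0 is set to 0, which matches the empty sum for r \<ge> 1).\<close>
fun hyperharm :: "nat \<Rightarrow> nat \<Rightarrow> real" where
  "hyperharm 0 n = (if n = 0 then 0 else 1 / real n)"
| "hyperharm (Suc r) n = (\<Sum>j=1..n. hyperharm r j)"

definition rzeta :: "nat \<Rightarrow> real" where
  "rzeta s = (\<Sum>n. 1 / (real (Suc n)) ^ s)"

definition hzeta :: "nat \<Rightarrow> real \<Rightarrow> real" where
  "hzeta s a = (\<Sum>j. 1 / (real j + a) ^ s)"

definition zetaH :: "nat \<Rightarrow> real" where
  "zetaH s = (\<Sum>n. harm (Suc n) / (real (Suc n)) ^ s)"

end

theory Submission
  imports Defs
begin

lemma hh1: "hyperharm (Suc 0) n = harm n"
  by (simp add: harm_def divide_inverse)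

lemma hh2s: "hyperharm 2 n = (\<Sum>j=1..n. harm j)"
proof -
  have e: "hyperharm (Suc 0) = harm" by (rule ext, rule hh1)
  show ?thesis by (simp only: numeral_2_eq_2 hyperharm.simps(2) e)
qed

lemma hh2: "hyperharm 2 n = (real n + 1) * harm n - real n"
proof (induction n)
  case 0 then show ?case by (simp add: harm_def numeral_2_eq_2)
next
  case (Suc n)
  have "hyperharm 2 (Suc n) = hyperharm 2 n + harm (Suc n)"
    unfolding hh2s by simp
  also have "\<dots> = (real (Suc n) + 1) * harm (Suc n) - real (Suc n)"
    unfolding Suc harm_Suc by (simp add: field_simps)
  finally show ?case .
qed

lemma harm_le_sqrt: "harm n \<le> 3 * sqrt (real n)"
proof (cases "n = 0")
  case True then show ?thesis by (simp add: harm_def)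
next
  case False
  have "harm n - ln (real n) \<le> harm 1 - ln (real 1)"
    using euler_mascheroni_sequence_decreasing[of 1 n] False by simp
  hence h: "harm n \<le> ln (real n) + 1" by (simp add: harm_def)
  have s1: "sqrt (real n) \<ge> 1" using False by simp
  have "ln (real n) = 2 * ln (sqrt (real n))"
    using False by (simp add: ln_sqrt)
  also have "\<dots> \<le> 2 * (sqrt (real n) - 1)"
    using ln_le_minus_one[of "sqrt (real n)"] s1 by simp
  finally have "ln (real n) \<le> 2 * (sqrt (real n) - 1)" .
  with h s1 show ?thesis by smt
qed

lemma harm_zeta_summable:
  assumes "s \<ge> 2"
  shows "summable (\<lambda>k. harm (Suc k) / (real (Suc k)) ^ s)"
proof (rule summable_comparison_test)
  have "summable (\<lambda>n. real n powr (-3/2))" by (simp add: summable_real_powr_iff)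
  hence "summable (\<lambda>k. real (Suc k) powr (-3/2))"
    by (subst summable_Suc_iff)
  thus "summable (\<lambda>k. 3 * real (Suc k) powr (-3/2))" by (rule summable_mult)
  show "\<exists>N. \<forall>n\<ge>N. norm (harm (Suc n) / real (Suc n) ^ s) \<le> 3 * real (Suc n) powr (-3/2)"
  proof (intro exI allI impI)
    fix k :: nat
    define x where "x = real (Suc k)"
    have x1: "x \<ge> 1" by (simp add: x_def)
    have "harm (Suc k) / x ^ s \<le> 3 * sqrt x / x ^ s"
      using harm_le_sqrt[of "Suc k"] x1 by (simp add: x_def divide_right_mono)
    also have "\<dots> \<le> 3 * sqrt x / x ^ 2"
      using x1 assms by (intro divide_left_mono power_increasing) auto
    also have "3 * sqrt x / x ^ 2 = 3 * x powr (-3/2)"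
    proof -
      have "sqrt x / x ^ 2 = x powr (1/2) / x powr 2"
        using x1 by (simp add: powr_half_sqrt powr_realpow)
      also have "\<dots> = x powr (1/2 - 2)" by (rule powr_diff[symmetric])
      also have "(1/2 - 2::real) = -3/2" by simp
      finally show ?thesis by simp
    qed
    finally show "norm (harm (Suc k) / real (Suc k) ^ s) \<le> 3 * real (Suc k) powr (-3/2)"
      by (simp add: x_def harm_nonneg)
  qed
qed

theorem mainTheorem3:
  fixes m :: nat
  assumes "m \<ge> 3"
  shows "summable (\<lambda>n. hyperharm 2 (Suc n) / (real (Suc n)) ^ m)
    \<and> summable (\<lambda>n. harm (Suc n) * hzeta m (real (Suc n)))
    \<and> (\<Sum>n. hyperharm 2 (Suc n) / (real (Suc n)) ^ m)
          = (\<Sum>n. harm (Suc n) * hzeta m (real (Suc n)))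
    \<and> (\<Sum>n. harm (Suc n) * hzeta m (real (Suc n)))
          = zetaH (m - 1) + zetaH m - rzeta (m - 1)"
proof -
  define f where "f k = 1 / (real (Suc k)) ^ m" for k
  define a where "a n = (harm (Suc n) :: real)" for n
  define Z where "Z = zetaH (m - 1) + zetaH m - rzeta (m - 1)"
  have fpos: "f k \<ge> 0" for k by (simp add: f_def)
  have apos: "a n \<ge> 0" for n by (simp add: a_def harm_nonneg)
  have invsum: "summable (\<lambda>k. 1 / real (Suc k) ^ s)" if "s \<ge> 2" for s
  proof -
    have "summable (\<lambda>n. inverse (real n ^ s))" by (rule inverse_power_summable[OF that])
    hence "summable (\<lambda>k. inverse (real (Suc k) ^ s))" by (subst summable_Suc_iff)
    thus ?thesis by (simp add: divide_inverse)
  qed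
  have fsum: "summable f" unfolding f_def using invsum assms by simp
  have hz: "hzeta m (real (Suc n)) = (\<Sum>j. f (j + n))" for n
    unfolding hzeta_def f_def by (intro suminf_cong) (simp add: add_ac)
  have hzhas: "(f has_sum hzeta m (real (Suc n))) {n..}" for n
  proof -
    have "summable (\<lambda>j. f (j + n))" using fsum by (subst summable_iff_shift)
    hence "(\<lambda>j. f (j + n)) sums hzeta m (real (Suc n))" using hz by (simp add: summable_sums)
    hence "((\<lambda>j. f (j + n)) has_sum hzeta m (real (Suc n))) UNIV"
      by (rule sums_nonneg_imp_has_sum) (simp add: fpos)
    moreover have "range (\<lambda>j. j + n) = {n..}"
    proof (intro set_eqI iffI)
      fix x assume "x \<in> {n..}"
      hence "x = (x - n) + n" by simp
      thus "x \<in> range (\<lambda>j. j + n)" by blast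
    qed auto
    ultimately show ?thesis
      using has_sum_reindex[of "\<lambda>j. j + n" UNIV f] by (simp add: o_def)
  qed
  have Tk: "hyperharm 2 (Suc k) = (\<Sum>n\<le>k. a n)" for k
  proof -
    have "(\<Sum>j=1..Suc k. harm j) = (\<Sum>n\<le>k. harm (Suc n) :: real)"
      by (induction k) auto
    thus ?thesis by (simp add: hh2s a_def)
  qed
  have key: "hyperharm 2 (Suc k) / real (Suc k) ^ m =
      harm (Suc k) / real (Suc k) ^ (m - 1) + harm (Suc k) / real (Suc k) ^ m
      - 1 / real (Suc k) ^ (m - 1)" for k
  proof -
    obtain p where p: "m = Suc p" using assms by (cases m) auto
    define x where "x = real (Suc k)"
    define y where "y = x ^ p"
    define H where "H = (harm (Suc k) :: real)"
    have x0: "x > 0" and y0: "y > 0" by (simp_all add: x_def y_def)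
    have e: "((x + 1) * H - x) / (x * y) = H / y + H / (x * y) - 1 / y"
      using x0 y0 by (simp add: field_simps)
    show ?thesis unfolding p hh2 using e
      by (simp add: x_def y_def H_def)
  qed
  have s1: "(\<lambda>k. harm (Suc k) / real (Suc k) ^ (m - 1)) sums zetaH (m - 1)"
    unfolding zetaH_def by (rule summable_sums, rule harm_zeta_summable) (use assms in simp)
  have s2: "(\<lambda>k. harm (Suc k) / real (Suc k) ^ m) sums zetaH m"
    unfolding zetaH_def by (rule summable_sums, rule harm_zeta_summable) (use assms in simp)
  have s3: "(\<lambda>k. 1 / real (Suc k) ^ (m - 1)) sums rzeta (m - 1)"
    unfolding rzeta_def by (rule summable_sums, rule invsum) (use assms in simp)
  have gs: "(\<lambda>k. hyperharm 2 (Suc k) / real (Suc k) ^ m) sums Z"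
    unfolding key Z_def by (intro sums_diff sums_add s1 s2 s3)
  define g where "g k = hyperharm 2 (Suc k) / real (Suc k) ^ m" for k
  have gpos: "g k \<ge> 0" for k unfolding g_def Tk using apos by (simp add: sum_nonneg)
  have ghas: "(g has_sum Z) UNIV"
    by (rule sums_nonneg_imp_has_sum) (use gs gpos in \<open>simp_all add: g_def[abs_def]\<close>)
  define F where "F = (\<lambda>(k, n). a n * f k)"
  have Fk: "((\<lambda>n. F (k, n)) has_sum g k) {..k}" for k
  proof -
    have "((\<lambda>n. F (k, n)) has_sum (\<Sum>n\<le>k. F (k, n))) {..k}" by simp
    moreover have "(\<Sum>n\<le>k. F (k, n)) = g k"
      unfolding F_def g_def Tk f_def by (simp add: sum_divide_distrib)
    ultimately show ?thesis by simp
  qed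
  have Fsum: "F summable_on Sigma UNIV (\<lambda>k. {..k})"
    by (rule summable_on_SigmaI[OF Fk]) (use ghas in \<open>auto simp: F_def summable_on_def intro!: mult_nonneg_nonneg apos fpos\<close>)
  have Fhas: "(F has_sum Z) (Sigma UNIV (\<lambda>k. {..k}))"
    by (rule has_sum_SigmaI[OF Fk ghas Fsum])
  define G where "G = (\<lambda>(n, k). a n * f k)"
  have bij: "bij_betw (\<lambda>(n, k). (k, n)) (Sigma UNIV (\<lambda>n. {n..})) (Sigma UNIV (\<lambda>k. {..k}))"
    by (rule bij_betwI[of _ _ _ "\<lambda>(k, n). (n, k)"]) auto
  have Ghas: "(G has_sum Z) (Sigma UNIV (\<lambda>n. {n..}))"
  proof -
    have "((\<lambda>x. F ((\<lambda>(n, k). (k, n)) x)) has_sum Z) (Sigma UNIV (\<lambda>n. {n..}))"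
      using has_sum_reindex_bij_betw[OF bij, of F Z] Fhas by simp
    moreover have "(\<lambda>x. F ((\<lambda>(n, k). (k, n)) x)) = G"
      by (auto simp: F_def G_def)
    ultimately show ?thesis by simp
  qed
  have Gn: "((\<lambda>k. G (n, k)) has_sum (a n * hzeta m (real (Suc n)))) {n..}" for n
    unfolding G_def using has_sum_cmult_right[OF hzhas[of n], of "a n"] by simp
  have "((\<lambda>n. a n * hzeta m (real (Suc n))) has_sum Z) UNIV"
    by (rule has_sum_SigmaD[OF Ghas Gn])
  hence hs: "(\<lambda>n. harm (Suc n) * hzeta m (real (Suc n))) sums Z"
    unfolding a_def by (rule has_sum_imp_sums)
  from gs hs show ?thesis
    by (auto simp: sums_iff Z_def)
qed

end
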